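(* Let $(x_i,y_i)_{i\in[n]}$ be i.i.d. pairs in $\mathbb R^d\times[-1,1]$, let $g(x)=\mathbb E[y\mid x]$, $z_i=y_i-g(x_i)$, and $\sigma^2=\mathbb E[\mathrm{Var}(y\mid x)]$. Let $\mathcal F$ be any class of functions $\mathbb R^d\to\mathbb R$ (such that the events below are measurable, e.g. $\mathcal F$ countable) and let $\epsilon>0$. Then \[ \mathbb P\Big(\exists f\in\mathcal F:\ \tfrac1n\sum_{i=1}^n (y_i-f(x_i))^2\le \sigma^2-\epsilon\Big)\le 2\exp\Big(-\frac{n\epsilon^2}{8^3}\Big)+\mathbb P\Big(\exists f\in\mathcal F:\ \tfrac1n\sum_{i=1}^n f(x_i)z_i\ge \tfrac{\epsilon}{4}\Big). \]
   Context: $g(x)=\mathbb E[y\mid x]$ is the regression function for the common joint distribution of $(x,y)$; $z_i$ is the noise part of the label $y_i$; $\sigma^2=\mathbb E[(y-g(x))^2]$ is the expected conditional variance of the output. *)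

theory Defs
  imports "HOL-Probability.Probability"
begin

definition regression_fun :: "('d::euclidean_space \<times> real) measure \<Rightarrow> ('d \<Rightarrow> real) \<Rightarrow> bool" where
  "regression_fun \<mu> g \<longleftrightarrow> g \<in> borel_measurable borel \<and>
     (AE p in \<mu>. g (fst p) = real_cond_exp \<mu> (vimage_algebra (space \<mu>) fst borel) snd p)"

text \<open>Expected conditional variance sigma^2 = E[(y - g(x))^2].\<close>
definition noise_var :: "('d::euclidean_space \<times> real) measure \<Rightarrow> ('d \<Rightarrow> real) \<Rightarrow> real" where
  "noise_var \<mu> g = (\<integral>p. (snd p - g (fst p))\<^sup>2 \<partial>\<mu>)"

end

theory Submission
  imports Defs
begin

lemma key_mu:
  fixes \<mu> :: "('d::euclidean_space \<times> real) measure" and g :: "'d \<Rightarrow> real"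
  assumes P: "prob_space \<mu>" and S: "sets \<mu> = sets borel" and reg: "regression_fun \<mu> g"
    and B: "AE p in \<mu>. \<bar>snd p\<bar> \<le> 1"
  shows "AE p in \<mu>. \<bar>g (fst p)\<bar> \<le> 1"
    and "noise_var \<mu> g = (\<integral>p. (snd p)\<^sup>2 - (g (fst p))\<^sup>2 \<partial>\<mu>)"
proof -
  interpret prob_space \<mu> by (rule P)
  define F where "F = vimage_algebra (space \<mu>) fst (borel :: 'd measure)"
  have mfst: "fst \<in> \<mu> \<rightarrow>\<^sub>M (borel :: 'd measure)"
    unfolding measurable_cong_sets[OF S refl] by (intro borel_measurable_continuous_onI continuous_on_fst continuous_on_id)
  have msnd: "snd \<in> borel_measurable \<mu>"
    unfolding measurable_cong_sets[OF S refl] by (intro borel_measurable_continuous_onI continuous_on_snd continuous_on_id)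
  have gm: "g \<in> borel_measurable borel" using reg unfolding regression_fun_def by auto
  have sub: "subalgebra \<mu> F"
    unfolding subalgebra_def F_def sets_vimage_algebra
    by (auto intro!: sets.sigma_sets_subset measurable_sets[OF mfst])
  interpret finite_measure_subalgebra \<mu> F
    by unfold_locales (rule sub)
  have gF: "(\<lambda>p. g (fst p)) \<in> borel_measurable F"
    unfolding F_def by (rule measurable_compose[OF measurable_vimage_algebra1 gm]) auto
  have gM: "(\<lambda>p. g (fst p)) \<in> borel_measurable \<mu>"
    by (rule measurable_compose[OF mfst gm])
  have ae: "AE p in \<mu>. g (fst p) = real_cond_exp \<mu> F snd p"
    using reg unfolding regression_fun_def F_def by auto
  have isnd: "integrable \<mu> snd"
    by (rule integrable_const_bound[where B=1]) (use B msnd in auto)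
  have le: "AE p in \<mu>. real_cond_exp \<mu> F snd p \<le> 1"
    by (rule real_cond_exp_le_c[OF isnd]) (use B in auto)
  have ge: "AE p in \<mu>. real_cond_exp \<mu> F snd p \<ge> -1"
    by (rule real_cond_exp_ge_c[OF isnd]) (use B in auto)
  show gb: "AE p in \<mu>. \<bar>g (fst p)\<bar> \<le> 1"
    using ae le ge by eventually_elim auto
  have b1: "AE p in \<mu>. norm (g (fst p) * snd p) \<le> 1"
    using B gb by eventually_elim (simp only: real_norm_def abs_mult, rule mult_le_one, auto)
  have b2: "AE p in \<mu>. norm (g (fst p) * g (fst p)) \<le> 1"
    using gb by eventually_elim (simp only: real_norm_def abs_mult, rule mult_le_one, auto)
  have b3: "AE p in \<mu>. norm (snd p * snd p) \<le> 1"
    using B by eventually_elim (simp only: real_norm_def abs_mult, rule mult_le_one, auto)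
  have i1: "integrable \<mu> (\<lambda>p. g (fst p) * snd p)"
    by (rule integrable_const_bound[OF b1]) (use gM msnd in auto)
  have i2: "integrable \<mu> (\<lambda>p. g (fst p) * g (fst p))"
    by (rule integrable_const_bound[OF b2]) (use gM in auto)
  have i3: "integrable \<mu> (\<lambda>p. snd p * snd p)"
    by (rule integrable_const_bound[OF b3]) (use msnd in auto)
  have "(\<integral>p. g (fst p) * snd p \<partial>\<mu>) = (\<integral>p. g (fst p) * real_cond_exp \<mu> F snd p \<partial>\<mu>)"
    using real_cond_exp_intg(2)[OF i1 gF msnd] by simp
  also have "\<dots> = (\<integral>p. g (fst p) * g (fst p) \<partial>\<mu>)"
    by (rule integral_cong_AE) (use ae gM in auto)
  finally have eq: "(\<integral>p. g (fst p) * snd p \<partial>\<mu>) = (\<integral>p. g (fst p) * g (fst p) \<partial>\<mu>)" .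
  have "noise_var \<mu> g = (\<integral>p. snd p * snd p - 2 * (g (fst p) * snd p) + g (fst p) * g (fst p) \<partial>\<mu>)"
    unfolding noise_var_def by (rule Bochner_Integration.integral_cong) (auto simp: power2_eq_square algebra_simps)
  also have "\<dots> = (\<integral>p. snd p * snd p \<partial>\<mu>) - 2 * (\<integral>p. g (fst p) * snd p \<partial>\<mu>) + (\<integral>p. g (fst p) * g (fst p) \<partial>\<mu>)"
    using i1 i2 i3 by simp
  also have "\<dots> = (\<integral>p. snd p * snd p \<partial>\<mu>) - (\<integral>p. g (fst p) * g (fst p) \<partial>\<mu>)"
    using eq by simp
  also have "\<dots> = (\<integral>p. (snd p)\<^sup>2 - (g (fst p))\<^sup>2 \<partial>\<mu>)"
    using i2 i3 by (simp add: power2_eq_square)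
  finally show "noise_var \<mu> g = (\<integral>p. (snd p)\<^sup>2 - (g (fst p))\<^sup>2 \<partial>\<mu>)" .
qed
theorem mainTheorem2:
  fixes M :: "'a measure" and \<mu> :: "('d::euclidean_space \<times> real) measure"
    and X :: "nat \<Rightarrow> 'a \<Rightarrow> 'd" and Y :: "nat \<Rightarrow> 'a \<Rightarrow> real"
    and n :: nat and g :: "'d \<Rightarrow> real" and \<F> :: "('d \<Rightarrow> real) set" and \<epsilon> :: real
  assumes "prob_space M"
    and "prob_space \<mu>" and "sets \<mu> = sets borel"
    and meas: "\<And>i. i < n \<Longrightarrow> (\<lambda>\<omega>. (X i \<omega>, Y i \<omega>)) \<in> M \<rightarrow>\<^sub>M borel"
    and ident: "\<And>i. i < n \<Longrightarrow> distr M borel (\<lambda>\<omega>. (X i \<omega>, Y i \<omega>)) = \<mu>"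
    and indep: "prob_space.indep_vars M (\<lambda>_. borel) (\<lambda>i \<omega>. (X i \<omega>, Y i \<omega>)) {..<n}"
    and bounded: "\<And>i \<omega>. i < n \<Longrightarrow> \<omega> \<in> space M \<Longrightarrow> \<bar>Y i \<omega>\<bar> \<le> 1"
    and reg: "regression_fun \<mu> g"
    and ev1: "{\<omega> \<in> space M. \<exists>f\<in>\<F>. (1 / real n) * (\<Sum>i<n. (Y i \<omega> - f (X i \<omega>))\<^sup>2)
                 \<le> noise_var \<mu> g - \<epsilon>} \<in> sets M"
    and ev2: "{\<omega> \<in> space M. \<exists>f\<in>\<F>. (1 / real n) * (\<Sum>i<n. f (X i \<omega>) * (Y i \<omega> - g (X i \<omega>)))
                 \<ge> \<epsilon> / 4} \<in> sets M"
    and "\<epsilon> > 0"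
  shows "measure M {\<omega> \<in> space M. \<exists>f\<in>\<F>. (1 / real n) * (\<Sum>i<n. (Y i \<omega> - f (X i \<omega>))\<^sup>2)
                 \<le> noise_var \<mu> g - \<epsilon>}
         \<le> 2 * exp (- (real n * \<epsilon>\<^sup>2 / 8 ^ 3))
           + measure M {\<omega> \<in> space M. \<exists>f\<in>\<F>. (1 / real n) * (\<Sum>i<n. f (X i \<omega>) * (Y i \<omega> - g (X i \<omega>)))
                 \<ge> \<epsilon> / 4}"
proof -
  interpret M: prob_space M by fact
  let ?A = "{\<omega> \<in> space M. \<exists>f\<in>\<F>. (1 / real n) * (\<Sum>i<n. (Y i \<omega> - f (X i \<omega>))\<^sup>2)
                 \<le> noise_var \<mu> g - \<epsilon>}"
  let ?B = "{\<omega> \<in> space M. \<exists>f\<in>\<F>. (1 / real n) * (\<Sum>i<n. f (X i \<omega>) * (Y i \<omega> - g (X i \<omega>)))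
                 \<ge> \<epsilon> / 4}"
  show ?thesis
  proof (cases "n = 0")
    case True
    have "measure M ?A \<le> 1" by (rule M.prob_le_1)
    moreover have "0 \<le> measure M ?B" by (rule measure_nonneg)
    moreover have "2 * exp (- (real n * \<epsilon>\<^sup>2 / 8 ^ 3)) = 2" using True by simp
    ultimately show ?thesis by linarith
  next
    case False
    then have npos: "real n > 0" by simp
    define \<sigma> where "\<sigma> = noise_var \<mu> g"
    define P where "P i = (\<lambda>\<omega>. (X i \<omega>, Y i \<omega>))" for i
    define h :: "'d \<times> real \<Rightarrow> real" where "h p = (snd p)\<^sup>2 - (g (fst p))\<^sup>2" for p
    define W where "W i \<omega> = h (P i \<omega>)" for i \<omega>
    have gm[measurable]: "g \<in> borel_measurable borel" using reg unfolding regression_fun_def by auto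
    have fstm[measurable]: "fst \<in> (borel :: ('d \<times> real) measure) \<rightarrow>\<^sub>M (borel :: 'd measure)"
      by (intro borel_measurable_continuous_onI continuous_on_fst continuous_on_id)
    have sndm[measurable]: "snd \<in> (borel :: ('d \<times> real) measure) \<rightarrow>\<^sub>M (borel :: real measure)"
      by (intro borel_measurable_continuous_onI continuous_on_snd continuous_on_id)
    have hm: "h \<in> borel_measurable borel" unfolding h_def by measurable
    have Pm: "P i \<in> M \<rightarrow>\<^sub>M borel" if "i < n" for i using meas[OF that] unfolding P_def .
    have Wm[measurable]: "W i \<in> borel_measurable M" if "i < n" for i
      unfolding W_def by (rule measurable_compose[OF Pm[OF that] hm])
    have n0: "0 < n" using False by simp
    have "AE p in distr M borel (P 0). \<bar>snd p\<bar> \<le> 1"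
    proof (subst AE_distr_iff[OF Pm[OF n0]])
      show "{x \<in> space borel. \<bar>snd x\<bar> \<le> 1} \<in> sets (borel :: ('d \<times> real) measure)" by measurable
      show "AE x in M. \<bar>snd (P 0 x)\<bar> \<le> 1" using bounded[OF n0] by (auto simp: P_def)
    qed
    then have Bmu: "AE p in \<mu>. \<bar>snd p\<bar> \<le> 1" unfolding P_def ident[OF n0] .
    note km = key_mu[OF assms(2,3) reg Bmu]
    have gbM: "AE \<omega> in M. \<bar>g (X i \<omega>)\<bar> \<le> 1" if "i < n" for i
    proof -
      have "AE p in distr M borel (P i). \<bar>g (fst p)\<bar> \<le> 1"
        unfolding P_def ident[OF that] by (rule km(1))
      from AE_distrD[OF Pm[OF that] this] show ?thesis by (simp add: P_def)
    qed
    have EW: "M.expectation (W i) = \<sigma>" if "i < n" for i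
    proof -
      have "M.expectation (W i) = integral\<^sup>L (distr M borel (P i)) h"
        unfolding W_def by (rule integral_distr[OF Pm[OF that] hm, symmetric])
      also have "\<dots> = \<sigma>" using ident[OF that] km(2) by (simp add: P_def \<sigma>_def h_def[abs_def])
      finally show ?thesis .
    qed
    interpret H: Hoeffding_ineq M "{..<n}" W "\<lambda>_. -1" "\<lambda>_. 1" "\<Sum>i\<in>{..<n}. M.expectation (W i)"
    proof unfold_locales
      show "finite {..<n}" by simp
      show "M.indep_vars (\<lambda>_. borel) W {..<n}"
        unfolding W_def using M.indep_vars_compose2[OF indep, of "\<lambda>_. h" "\<lambda>_. borel"] hm
        by (simp add: P_def)
      fix i assume i: "i \<in> {..<n}"
      then have i': "i < n" by simp
      have yb: "AE \<omega> in M. \<bar>Y i \<omega>\<bar> \<le> 1" using bounded[OF i'] by (intro AE_I2) auto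
      show "AE x in M. W i x \<in> {- 1..1}"
        using gbM[OF i'] yb
      proof eventually_elim
        case (elim \<omega>)
        have "(Y i \<omega>)\<^sup>2 \<le> 1" "(g (X i \<omega>))\<^sup>2 \<le> 1"
          using elim by (simp_all add: abs_square_le_1)
        then show ?case using zero_le_power2[of "Y i \<omega>"] zero_le_power2[of "g (X i \<omega>)"]
          unfolding W_def h_def P_def by (simp only: fst_conv snd_conv atLeastAtMost_iff, intro conjI; linarith)
      qed
    qed
    have mu_eq: "(\<Sum>i\<in>{..<n}. M.expectation (W i)) = real n * \<sigma>" using EW by simp
    define C where "C = {\<omega> \<in> space M. (\<Sum>i\<in>{..<n}. W i \<omega>) \<le> real n * \<sigma> - real n * \<epsilon> / 2}"
    have Csets: "C \<in> sets M" unfolding C_def by measurable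
    have "measure M C \<le> exp (-2 * (real n * \<epsilon> / 2)\<^sup>2 / (\<Sum>i\<in>{..<n}. (1 - (-1::real))\<^sup>2))"
      using H.Hoeffding_ineq_le[of "real n * \<epsilon> / 2"] npos \<open>\<epsilon> > 0\<close> mu_eq unfolding C_def by simp
    also have "\<dots> = exp (- (real n * \<epsilon>\<^sup>2 / 8))"
      using npos by (simp add: power2_eq_square field_simps)
    also have "\<dots> \<le> exp (- (real n * \<epsilon>\<^sup>2 / 8 ^ 3))"
      using npos by (simp add: divide_left_mono)
    also have "\<dots> \<le> 2 * exp (- (real n * \<epsilon>\<^sup>2 / 8 ^ 3))" by simp
    finally have Cb: "measure M C \<le> 2 * exp (- (real n * \<epsilon>\<^sup>2 / 8 ^ 3))" .
    have sub: "?A \<subseteq> ?B \<union> C"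
    proof
      fix \<omega> assume "\<omega> \<in> ?A"
      then obtain f where om: "\<omega> \<in> space M" and f: "f \<in> \<F>"
        and le: "(1 / real n) * (\<Sum>i<n. (Y i \<omega> - f (X i \<omega>))\<^sup>2) \<le> \<sigma> - \<epsilon>"
        unfolding \<sigma>_def by auto
      show "\<omega> \<in> ?B \<union> C"
      proof (cases "(1 / real n) * (\<Sum>i<n. f (X i \<omega>) * (Y i \<omega> - g (X i \<omega>))) \<ge> \<epsilon> / 4")
        case True then show ?thesis using om f by auto
      next
        case lt: False
        let ?S = "\<Sum>i<n. (Y i \<omega> - f (X i \<omega>))\<^sup>2"
        let ?T = "\<Sum>i<n. f (X i \<omega>) * (Y i \<omega> - g (X i \<omega>))"
        let ?Q = "\<Sum>i<n. (f (X i \<omega>) - g (X i \<omega>))\<^sup>2"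
        have "?S = (\<Sum>i<n. W i \<omega> - 2 * (f (X i \<omega>) * (Y i \<omega> - g (X i \<omega>))) + (f (X i \<omega>) - g (X i \<omega>))\<^sup>2)"
          by (intro sum.cong) (auto simp: W_def h_def P_def power2_eq_square algebra_simps)
        also have "\<dots> = (\<Sum>i<n. W i \<omega>) - 2 * ?T + ?Q"
          by (simp add: sum.distrib sum_subtractf sum_distrib_left)
        finally have id: "?S = (\<Sum>i<n. W i \<omega>) - 2 * ?T + ?Q" .
        have Q0: "?Q \<ge> 0" by (intro sum_nonneg) auto
        have S: "?S \<le> real n * (\<sigma> - \<epsilon>)" using le npos by (simp add: field_simps)
        have T: "?T < real n * \<epsilon> / 4" using lt npos by (simp add: field_simps)
        have "(\<Sum>i<n. W i \<omega>) \<le> real n * \<sigma> - real n * \<epsilon> / 2"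
          using id Q0 S T by (simp add: algebra_simps)
        then show ?thesis using om unfolding C_def by auto
      qed
    qed
    have "measure M ?A \<le> measure M (?B \<union> C)"
      by (rule M.finite_measure_mono[OF sub]) (use ev2 Csets in auto)
    also have "\<dots> \<le> measure M ?B + measure M C"
      by (rule measure_Un_le[OF ev2 Csets])
    finally show ?thesis using Cb by simp
  qed
qed

end
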